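(* Let $K\neq0$ and let $(\mathcal M,\rho)$ be a metric space such that $\operatorname{diam}(\mathcal M)\le\pi/(2\sqrt K)$ when $K>0$. If $(\mathcal M,\rho)$ satisfies the one-sided four point $\operatorname{cosq}_K$ condition, then every pair of points of $\mathcal M$ is joined by at most one shortest.
   Context: A shortest joining $P$ to $Q$ is a rectifiable curve from $P$ to $Q$ of length $\rho(P,Q)$ (curves identified up to reparametrization). Let $\kappa=\sqrt{|K|}$. For $A\neq P$, $B\neq Q$ (with $\rho(A,P),\rho(B,Q),\rho(A,B)<\pi/\sqrt K$ if $K>0$) put $x=\rho(A,P)$, $y=\rho(B,Q)$, $a=\rho(A,B)$, $b=\rho(P,Q)$, $d=\rho(P,B)$, $f=\rho(A,Q)$; for $K>0$ $$\operatorname{cosq}_K(\overrightarrow{AP},\overrightarrow{BQ})=\frac{\cos\kappa b+\cos\kappa x\cos\kappa y}{\sin\kappa x\sin\kappa y}-\frac{(\cos\kappa x+\cos\kappa d)(\cos\kappa y+\cos\kappa f)}{(1+\cos\kappa a)\sin\kappa x\sin\kappa y},$$ and for $K<0$ $$\operatorname{cosq}_K(\overrightarrow{AP},\overrightarrow{BQ})=\frac{(\cosh\kappa x+\cosh\kappa d)(\cosh\kappa y+\cosh\kappa f)}{(1+\cosh\kappa a)\sinh\kappa x\sinh\kappa y}-\frac{\cosh\kappa b+\cosh\kappa x\cosh\kappa y}{\sinh\kappa x\sinh\kappa y}.$$ Upper/lower four point $\operatorname{cosq}_K$ condition: $\operatorname{cosq}_K\le1$ / $\ge-1$ for all such quadruples;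 one-sided: at least one holds. *)

theory Defs
  imports "HOL-Analysis.Analysis"
begin

text \<open>The quadrilateral cosine cosq_K of the ordered pair of "vectors" AP, BQ,
  for curvature parameter K (nonzero), with kappa = sqrt |K|.\<close>
definition cosq :: "real \<Rightarrow> 'a::metric_space \<Rightarrow> 'a \<Rightarrow> 'a \<Rightarrow> 'a \<Rightarrow> real" where
  "cosq K A P B Q =
    (let \<kappa> = sqrt \<bar>K\<bar>;
         x = dist A P; y = dist B Q; a = dist A B;
         b = dist P Q; d = dist P B; f = dist A Q
     in if K > 0 then
          (cos (\<kappa>*b) + cos (\<kappa>*x) * cos (\<kappa>*y)) / (sin (\<kappa>*x) * sin (\<kappa>*y))
          - ((cos (\<kappa>*x) + cos (\<kappa>*d)) * (cos (\<kappa>*y) + cos (\<kappa>*f)))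
              / ((1 + cos (\<kappa>*a)) * sin (\<kappa>*x) * sin (\<kappa>*y))
        else
          ((cosh (\<kappa>*x) + cosh (\<kappa>*d)) * (cosh (\<kappa>*y) + cosh (\<kappa>*f)))
              / ((1 + cosh (\<kappa>*a)) * sinh (\<kappa>*x) * sinh (\<kappa>*y))
          - (cosh (\<kappa>*b) + cosh (\<kappa>*x) * cosh (\<kappa>*y)) / (sinh (\<kappa>*x) * sinh (\<kappa>*y)))"

definition cosq_admissible :: "real \<Rightarrow> 'a::metric_space \<Rightarrow> 'a \<Rightarrow> 'a \<Rightarrow> 'a \<Rightarrow> bool" where
  "cosq_admissible K A P B Q \<longleftrightarrow> A \<noteq> P \<and> B \<noteq> Q \<and>
     (K > 0 \<longrightarrow> dist A P < pi / sqrt K \<and> dist B Q < pi / sqrt K \<and> dist A B < pi / sqrt K)"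

definition upper_cosq_condition :: "real \<Rightarrow> 'a::metric_space itself \<Rightarrow> bool" where
  "upper_cosq_condition K (_ :: 'a itself) \<longleftrightarrow>
     (\<forall>A P B Q :: 'a. cosq_admissible K A P B Q \<longrightarrow> cosq K A P B Q \<le> 1)"

definition lower_cosq_condition :: "real \<Rightarrow> 'a::metric_space itself \<Rightarrow> bool" where
  "lower_cosq_condition K (_ :: 'a itself) \<longleftrightarrow>
     (\<forall>A P B Q :: 'a. cosq_admissible K A P B Q \<longrightarrow> cosq K A P B Q \<ge> -1)"

definition one_sided_cosq_condition :: "real \<Rightarrow> 'a::metric_space itself \<Rightarrow> bool" where
  "one_sided_cosq_condition K T \<longleftrightarrow> upper_cosq_condition K T \<or> lower_cosq_condition K T"

definition polygon_sums :: "(real \<Rightarrow> 'a::metric_space) \<Rightarrow> real \<Rightarrow> real \<Rightarrow> real set" where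
  "polygon_sums \<gamma> a b = {(\<Sum>i<n. dist (\<gamma> (t i)) (\<gamma> (t (Suc i)))) | t n.
       t 0 = a \<and> t n = b \<and> (\<forall>i<n. t i \<le> t (Suc i))}"

definition curve_length :: "(real \<Rightarrow> 'a::metric_space) \<Rightarrow> real \<Rightarrow> real \<Rightarrow> real" where
  "curve_length \<gamma> a b = Sup (polygon_sums \<gamma> a b)"

definition rectifiable_curve :: "(real \<Rightarrow> 'a::metric_space) \<Rightarrow> real \<Rightarrow> real \<Rightarrow> bool" where
  "rectifiable_curve \<gamma> a b \<longleftrightarrow> a \<le> b \<and> continuous_on {a..b} \<gamma> \<and> bdd_above (polygon_sums \<gamma> a b)"

definition shortest :: "'a::metric_space \<Rightarrow> 'a \<Rightarrow> (real \<Rightarrow> 'a) \<Rightarrow> real \<Rightarrow> real \<Rightarrow> bool" where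
  "shortest P Q \<gamma> a b \<longleftrightarrow> rectifiable_curve \<gamma> a b \<and> \<gamma> a = P \<and> \<gamma> b = Q \<and>
     curve_length \<gamma> a b = dist P Q"

text \<open>Two rectifiable curves are identified up to reparametrization iff they have the same
  arc-length (natural) parametrization: points at equal arc length from the start coincide
  (and the total lengths agree).\<close>
definition same_curve :: "(real \<Rightarrow> 'a::metric_space) \<Rightarrow> real \<Rightarrow> real \<Rightarrow> (real \<Rightarrow> 'a) \<Rightarrow> real \<Rightarrow> real \<Rightarrow> bool" where
  "same_curve \<gamma>1 a1 b1 \<gamma>2 a2 b2 \<longleftrightarrow>
     curve_length \<gamma>1 a1 b1 = curve_length \<gamma>2 a2 b2 \<and>
     (\<forall>s\<in>{a1..b1}. \<forall>t\<in>{a2..b2}.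
        curve_length \<gamma>1 a1 s = curve_length \<gamma>2 a2 t \<longrightarrow> \<gamma>1 s = \<gamma>2 t)"

end

theory Submission
  imports Defs
begin


lemma ps_single: "a \<le> b \<Longrightarrow> dist (\<gamma> a) (\<gamma> b) \<in> polygon_sums \<gamma> a b"
  unfolding polygon_sums_def
  by (rule CollectI, rule exI[of _ "\<lambda>i. if i = 0 then a else b"], rule exI[of _ 1]) auto

lemma ps_concat:
  assumes "u \<in> polygon_sums \<gamma> a s" "v \<in> polygon_sums \<gamma> s b"
  shows "u + v \<in> polygon_sums \<gamma> a b"
proof -
  from assms(1) obtain t1 n1 where u: "u = (\<Sum>i<n1. dist (\<gamma> (t1 i)) (\<gamma> (t1 (Suc i))))"
    "t1 0 = a" "t1 n1 = s" "\<forall>i<n1. t1 i \<le> t1 (Suc i)" unfolding polygon_sums_def by blast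
  from assms(2) obtain t2 n2 where v: "v = (\<Sum>i<n2. dist (\<gamma> (t2 i)) (\<gamma> (t2 (Suc i))))"
    "t2 0 = s" "t2 n2 = b" "\<forall>i<n2. t2 i \<le> t2 (Suc i)" unfolding polygon_sums_def by blast
  define t where "t = (\<lambda>i. if i \<le> n1 then t1 i else t2 (i - n1))"
  define g where "g = (\<lambda>i. dist (\<gamma> (t i)) (\<gamma> (t (Suc i))))"
  have s1: "(\<Sum>i<n1. g i) = u" unfolding u g_def t_def by (intro sum.cong) auto
  have s2: "(\<Sum>i<n2. g (n1 + i)) = v"
  proof -
    have "g (n1 + i) = dist (\<gamma> (t2 i)) (\<gamma> (t2 (Suc i)))" for i
      using u(3) v(2) unfolding g_def t_def by (cases i) auto
    then show ?thesis unfolding v by simp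
  qed
  have "(\<Sum>i<n1+n2. g i) = (\<Sum>i<n1. g i) + (\<Sum>i<n2. g (n1 + i))"
    by (induct n2) (simp_all add: algebra_simps) 
  then have sum: "(\<Sum>i<n1+n2. g i) = u + v" using s1 s2 by simp
  have mono: "\<forall>i<n1+n2. t i \<le> t (Suc i)"
  proof (intro allI impI)
    fix i assume "i < n1 + n2"
    show "t i \<le> t (Suc i)"
    proof (cases "i < n1")
      case True then show ?thesis using u(4) unfolding t_def by auto
    next
      case False
      then have "i - n1 < n2" "Suc i - n1 = Suc (i - n1)" using \<open>i < n1 + n2\<close> by auto
      then show ?thesis using False v(4) u(3) v(2) unfolding t_def
        by (cases "i = n1") auto
    qed
  qed
  have "t 0 = a" "t (n1+n2) = b" using u v unfolding t_def by (auto simp: le_Suc_eq)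
  then show ?thesis unfolding polygon_sums_def mem_Collect_eq
    by (intro exI[of _ t] exI[of _ "n1+n2"]) (use sum mono in \<open>auto simp: g_def\<close>)
qed

lemma ps_bdd_sub:
  assumes "bdd_above (polygon_sums \<gamma> a b)" "a \<le> s" "s \<le> b"
  shows "bdd_above (polygon_sums \<gamma> a s)" "bdd_above (polygon_sums \<gamma> s b)"
proof -
  from assms(1) obtain M where M: "\<And>x. x \<in> polygon_sums \<gamma> a b \<Longrightarrow> x \<le> M" by (auto simp: bdd_above_def)
  show "bdd_above (polygon_sums \<gamma> a s)"
  proof (rule bdd_aboveI)
    fix x assume "x \<in> polygon_sums \<gamma> a s"
    then have "x + dist (\<gamma> s) (\<gamma> b) \<in> polygon_sums \<gamma> a b" using ps_concat ps_single assms by blast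
    then show "x \<le> M" using M[of "x + dist (\<gamma> s) (\<gamma> b)"] zero_le_dist[of "\<gamma> s" "\<gamma> b"] by linarith
  qed
  show "bdd_above (polygon_sums \<gamma> s b)"
  proof (rule bdd_aboveI)
    fix x assume "x \<in> polygon_sums \<gamma> s b"
    then have "dist (\<gamma> a) (\<gamma> s) + x \<in> polygon_sums \<gamma> a b" using ps_concat ps_single assms by blast
    then show "x \<le> M" using M[of "dist (\<gamma> a) (\<gamma> s) + x"] zero_le_dist[of "\<gamma> a" "\<gamma> s"] by linarith
  qed
qed

lemma sup_add_le:
  fixes A B C :: "real set"
  assumes "A \<noteq> {}" "B \<noteq> {}" "bdd_above C" "\<And>x y. x \<in> A \<Longrightarrow> y \<in> B \<Longrightarrow> x + y \<in> C"
  shows "Sup A + Sup B \<le> Sup C"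
proof -
  have "Sup A \<le> Sup C - Sup B"
  proof (rule cSup_least[OF assms(1)])
    fix x assume x: "x \<in> A"
    have "Sup B \<le> Sup C - x"
    proof (rule cSup_least[OF assms(2)])
      fix y assume "y \<in> B"
      then have "x + y \<le> Sup C" using cSup_upper[OF assms(4)[OF x] assms(3)] by simp
      then show "y \<le> Sup C - x" by simp
    qed
    then show "x \<le> Sup C - Sup B" by simp
  qed
  then show ?thesis by simp
qed

lemma length_split:
  assumes "bdd_above (polygon_sums \<gamma> a b)" "a \<le> s" "s \<le> b"
  shows "curve_length \<gamma> a s + curve_length \<gamma> s b \<le> curve_length \<gamma> a b"
  unfolding curve_length_def
  by (rule sup_add_le) (use ps_single assms ps_concat in blast)+

lemma dist_le_length:
  assumes "bdd_above (polygon_sums \<gamma> a b)" "a \<le> b"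
  shows "dist (\<gamma> a) (\<gamma> b) \<le> curve_length \<gamma> a b"
  unfolding curve_length_def using cSup_upper[OF ps_single[OF assms(2)] assms(1)] .

lemma shortest_point:
  assumes "shortest P Q \<gamma> a b" "s \<in> {a..b}"
  shows "dist P (\<gamma> s) = curve_length \<gamma> a s" "dist (\<gamma> s) Q = dist P Q - curve_length \<gamma> a s"
proof -
  have r: "bdd_above (polygon_sums \<gamma> a b)" "\<gamma> a = P" "\<gamma> b = Q" "curve_length \<gamma> a b = dist P Q"
    using assms(1) unfolding shortest_def rectifiable_curve_def by auto
  have s: "a \<le> s" "s \<le> b" using assms(2) by auto
  have 1: "dist P (\<gamma> s) \<le> curve_length \<gamma> a s" using dist_le_length[OF ps_bdd_sub(1)[OF r(1) s] s(1)] r by simp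
  have 2: "dist (\<gamma> s) Q \<le> curve_length \<gamma> s b" using dist_le_length[OF ps_bdd_sub(2)[OF r(1) s] s(2)] r by simp
  have 3: "curve_length \<gamma> a s + curve_length \<gamma> s b \<le> dist P Q" using length_split[OF r(1) s] r by simp
  have 4: "dist P Q \<le> dist P (\<gamma> s) + dist (\<gamma> s) Q" by (rule dist_triangle)
  show "dist P (\<gamma> s) = curve_length \<gamma> a s" "dist (\<gamma> s) Q = dist P Q - curve_length \<gamma> a s"
    using 1 2 3 4 by linarith+
qed



lemma gen1:
  fixes A N R c x y :: real
  assumes "x \<noteq> 0" "y \<noteq> 0" "c \<noteq> 0" "c*A - N = c*(x*y) + R"
  shows "A/(x*y) - N/(c*x*y) = 1 + R/(c*x*y)"
proof -
  have "N = c*A - c*(x*y) - R" using assms(4) by simp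
  then show ?thesis using assms(1-3) by (simp add: field_simps)
qed

lemma gen2:
  fixes A N R c x y :: real
  assumes "x \<noteq> 0" "y \<noteq> 0" "c \<noteq> 0" "N - c*A = c*(x*y) + R"
  shows "N/(c*x*y) - A/(x*y) = 1 + R/(c*x*y)"
proof -
  have "N = c*A + c*(x*y) + R" using assms(4) by simp
  then show ?thesis using assms(1-3) by (simp add: field_simps)
qed

lemma gen3:
  fixes A N R c x y :: real
  assumes "x \<noteq> 0" "y \<noteq> 0" "c \<noteq> 0" "c*A - N = - c*(x*y) - c*R"
  shows "A/(x*y) - N/(c*x*y) = -1 - R/(x*y)"
proof -
  have "N = c*A + c*(x*y) + c*R" using assms(4) by simp
  then show ?thesis using assms(1-3) by (simp add: field_simps)
qed

lemma gen4:
  fixes A N R c x y :: real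
  assumes "x \<noteq> 0" "y \<noteq> 0" "c \<noteq> 0" "N - c*A = - c*(x*y) - c*R"
  shows "N/(c*x*y) - A/(x*y) = -1 - R/(x*y)"
proof -
  have "N/(c*x*y) - A/(x*y) = (N - c*A)/(c*(x*y))" using assms(1-3) by (simp add: field_simps)
  also have "\<dots> = (c*(- (x*y) - R))/(c*(x*y))" using assms(4) by (simp add: algebra_simps)
  also have "\<dots> = (- (x*y) - R)/(x*y)" using assms(3) by simp
  also have "\<dots> = -1 - R/(x*y)" using assms(1,2) by (simp add: diff_divide_distrib)
  finally show ?thesis .
qed

lemma up_pos:
  fixes S T E :: real
  assumes "0 < S" "0 < T" "S + T \<le> pi/2" "0 < E" "E \<le> pi/2"
  shows "(cos T + cos S * cos T)/(sin S * sin T) - ((cos S + cos E)*(cos T + cos (S+T)))/((1+cos S)* sin S* sin T) > 1"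
proof -
  have sS: "sin S > 0" using assms by (intro sin_gt_zero) auto
  have sT: "sin T > 0" using assms by (intro sin_gt_zero) auto
  have cS: "cos S > 0" using assms by (intro cos_gt_zero) auto
  have cT: "cos T > 0" using assms by (intro cos_gt_zero) auto
  have cST: "cos (S+T) \<ge> 0" using assms by (intro cos_ge_zero) auto
  have cE: "cos E < 1" using cos_monotone_0_pi[of 0 E] assms by auto
  have D: "(1+cos S)* sin S* sin T > 0" using sS sT cS by simp
  have eq: "(cos T + cos S * cos T)/(sin S * sin T) - ((cos S + cos E)*(cos T + cos (S+T)))/((1+cos S)* sin S* sin T)
     = 1 + (1 - cos E)*(cos T + cos (S+T)) / ((1+cos S)* sin S* sin T)"
    by (rule gen1) (use sS sT cS in \<open>auto simp: cos_add algebra_simps\<close>)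
  have "(1 - cos E)*(cos T + cos (S+T)) > 0" using cE cT cST by (intro mult_pos_pos) auto
  then have "(1 - cos E)*(cos T + cos (S+T)) / ((1+cos S)* sin S* sin T) > 0"
    using D by (rule divide_pos_pos)
  then show ?thesis using eq by simp
qed

lemma low_pos:
  fixes S T E :: real
  assumes "0 < S" "0 < T" "S + T \<le> pi/2" "0 < E" "E \<le> pi/2"
  shows "(cos E + cos S * cos T)/(sin S * sin T) - ((cos S + cos T)*(cos T + cos S))/((1+cos (S+T))* sin S* sin T) < -1"
proof -
  have sS: "sin S > 0" using assms by (intro sin_gt_zero) auto
  have sT: "sin T > 0" using assms by (intro sin_gt_zero) auto
  have cST: "cos (S+T) \<ge> 0" using assms by (intro cos_ge_zero) auto
  have cE: "cos E < 1" using cos_monotone_0_pi[of 0 E] assms by auto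
  have sq: "sin S ^2 = 1 - cos S ^2" "sin T ^2 = 1 - cos T ^2" using sin_squared_eq[of S] sin_squared_eq[of T] by simp_all
  have "(1 + cos (S+T))*(1 + cos S * cos T + sin S * sin T) = (1 + cos S * cos T)^2 - (sin S)^2 * (sin T)^2"
    unfolding cos_add by (simp add: power2_eq_square algebra_simps)
  also have "\<dots> = (cos S + cos T)^2"
    unfolding sq by (simp add: power2_eq_square algebra_simps)
  finally have id: "(1 + cos (S+T))*(1 + cos S * cos T + sin S * sin T) = (cos S + cos T)^2" .
  have id2: "(cos S + cos T)*(cos T + cos S) = (1 + cos (S+T))*(1 + cos S * cos T + sin S * sin T)"
    using id by (simp add: power2_eq_square algebra_simps)
  have eq: "(cos E + cos S * cos T)/(sin S * sin T) - ((cos S + cos T)*(cos T + cos S))/((1+cos (S+T))* sin S* sin T)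
     = -1 - (1 - cos E) / (sin S* sin T)"
    by (rule gen3) (use sS sT cST id2 in \<open>auto simp: algebra_simps\<close>)
  have "(1 - cos E) / (sin S* sin T) > 0" using cE sS sT by simp
  then show ?thesis using eq by simp
qed

lemma cosh_gt1: "(E::real) > 0 \<Longrightarrow> cosh E > 1"
proof (rule ccontr)
  assume "E > 0" "\<not> cosh E > 1"
  then have "sinh E > 0" by simp
  then have sq: "cosh E ^ 2 > 1" using cosh_square_eq[of E] by simp
  have "cosh E = 1" using cosh_real_ge_1[of E] \<open>\<not> cosh E > 1\<close> by linarith
  then show False using sq by simp
qed

lemma up_neg:
  fixes S T E :: real
  assumes "0 < S" "0 < T" "0 < E"
  shows "((cosh S + cosh E)*(cosh T + cosh (S+T)))/((1+cosh S)* sinh S* sinh T) - (cosh T + cosh S * cosh T)/(sinh S * sinh T) > 1"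
proof -
  have sS: "sinh S > 0" "sinh T > 0" using assms by auto
  have cS: "cosh S \<ge> 1" "cosh T \<ge> 1" "cosh (S+T) \<ge> 1" by (rule cosh_real_ge_1)+
  have cE: "cosh E > 1" using assms cosh_gt1 by auto
  have D: "(1+cosh S)* sinh S* sinh T > 0" using sS cS by simp
  have eq: "((cosh S + cosh E)*(cosh T + cosh (S+T)))/((1+cosh S)* sinh S* sinh T) - (cosh T + cosh S * cosh T)/(sinh S * sinh T)
     = 1 + (cosh E - 1)*(cosh T + cosh (S+T)) / ((1+cosh S)* sinh S* sinh T)"
    by (rule gen2) (use sS cS in \<open>auto simp: cosh_add algebra_simps\<close>)
  have "(cosh E - 1)*(cosh T + cosh (S+T)) > 0" using cE cS by (intro mult_pos_pos) auto
  then have "(cosh E - 1)*(cosh T + cosh (S+T)) / ((1+cosh S)* sinh S* sinh T) > 0"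
    using D by (rule divide_pos_pos)
  then show ?thesis using eq by simp
qed

lemma low_neg:
  fixes S T E :: real
  assumes "0 < S" "0 < T" "0 < E"
  shows "((cosh S + cosh T)*(cosh T + cosh S))/((1+cosh (S+T))* sinh S* sinh T) - (cosh E + cosh S * cosh T)/(sinh S * sinh T) < -1"
proof -
  have sS: "sinh S > 0" "sinh T > 0" using assms by auto
  have cS: "cosh (S+T) \<ge> 1" by (rule cosh_real_ge_1)
  have cE: "cosh E > 1" using assms cosh_gt1 by auto
  have sq: "sinh S ^2 = cosh S ^2 - 1" "sinh T ^2 = cosh T ^2 - 1" using cosh_square_eq[of S] cosh_square_eq[of T] by simp_all
  have id: "(1 + cosh (S+T))*(1 + cosh S * cosh T - sinh S * sinh T) = (1 + cosh S * cosh T)^2 - (sinh S)^2 * (sinh T)^2"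
    unfolding cosh_add by (simp add: power2_eq_square algebra_simps)
  also have "\<dots> = (cosh S + cosh T)*(cosh T + cosh S)"
    unfolding sq by (simp add: power2_eq_square algebra_simps)
  finally have id2: "(cosh S + cosh T)*(cosh T + cosh S) = (1 + cosh (S+T))*(1 + cosh S * cosh T - sinh S * sinh T)" by simp
  have eq: "((cosh S + cosh T)*(cosh T + cosh S))/((1+cosh (S+T))* sinh S* sinh T) - (cosh E + cosh S * cosh T)/(sinh S * sinh T)
     = -1 - (cosh E - 1) / (sinh S* sinh T)"
    by (rule gen4) (use sS cS id2 in \<open>auto simp: algebra_simps\<close>)
  have "(cosh E - 1) / (sinh S* sinh T) > 0" using cE sS by simp
  then show ?thesis using eq by simp
qed

lemma key_points:
  assumes K: "K \<noteq> 0"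
    and diam: "K > 0 \<Longrightarrow> \<forall>x y :: 'a::metric_space. dist x y \<le> pi / (2 * sqrt K)"
    and cond: "one_sided_cosq_condition K TYPE('a)"
    and d1: "dist P X = s" "dist P Y = s" "dist X Q = t" "dist Y Q = t" "dist P Q = s + t"
    and pos: "s > 0" "t > 0"
  shows "(X::'a) = Y"
proof (rule ccontr)
  assume ne: "X \<noteq> Y"
  define e where "e = dist X Y"
  have e0: "e > 0" using ne unfolding e_def by simp
  define k where "k = sqrt \<bar>K\<bar>"
  have k0: "k > 0" using K unfolding k_def by simp
  have PX: "P \<noteq> X" "Y \<noteq> Q" "Q \<noteq> Y" using d1 pos by auto
  have dd: "dist X P = s" "dist Q Y = t" "dist Y X = e" "dist Q X = t" "dist Y P = s"
    using d1 e_def by (simp_all add: dist_commute)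
  have adm: "cosq_admissible K P X Y Q" "cosq_admissible K P X Q Y"
  proof -
    have "dist x y < pi / sqrt K" if "K > 0" for x y :: 'a
    proof -
      have "dist x y \<le> pi / (2 * sqrt K)" using diam that by blast
      also have "\<dots> < pi / sqrt K" using that by (simp add: divide_strict_left_mono)
      finally show ?thesis .
    qed
    then show "cosq_admissible K P X Y Q" "cosq_admissible K P X Q Y"
      unfolding cosq_admissible_def using PX by auto
  qed
  have kdist: "k * dist x y \<le> pi / 2" if "K > 0" for x y :: 'a
  proof -
    have "dist x y \<le> pi / (2 * k)" using diam that unfolding k_def by simp
    then have "k * dist x y \<le> k * (pi / (2 * k))" using k0 by (intro mult_left_mono) auto
    then show ?thesis using k0 by simp
  qed
  have ks: "0 < k * s" "0 < k * t" "0 < k * e" using k0 pos e0 by simp_all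
  have dist_sum: "k * (s + t) = k * s + k * t" by (simp add: algebra_simps)
  have up: "cosq K P X Y Q > 1"
  proof (cases "K > 0")
    case True
    have b: "k * s + k * t \<le> pi/2" "k * e \<le> pi/2" using kdist[OF True, of P Q] kdist[OF True, of X Y] d1 e_def dist_sum by auto
    show ?thesis using up_pos[OF ks(1,2) b(1) ks(3) b(2)] True
      unfolding cosq_def Let_def k_def[symmetric] using d1 dd e_def dist_sum by simp
  next
    case False
    show ?thesis using up_neg[OF ks] False
      unfolding cosq_def Let_def k_def[symmetric] using d1 dd e_def dist_sum by simp
  qed
  have low: "cosq K P X Q Y < -1"
  proof (cases "K > 0")
    case True
    have b: "k * s + k * t \<le> pi/2" "k * e \<le> pi/2" using kdist[OF True, of P Q] kdist[OF True, of X Y] d1 e_def dist_sum by auto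
    show ?thesis using low_pos[OF ks(1,2) b(1) ks(3) b(2)] True
      unfolding cosq_def Let_def k_def[symmetric] using d1 dd e_def dist_sum by simp
  next
    case False
    show ?thesis using low_neg[OF ks] False
      unfolding cosq_def Let_def k_def[symmetric] using d1 dd e_def dist_sum by simp
  qed
  show False using cond adm up low
    unfolding one_sided_cosq_condition_def upper_cosq_condition_def lower_cosq_condition_def
    by force
qed

theorem mainTheorem11:
  fixes K :: real
  assumes "K \<noteq> 0"
    and "K > 0 \<Longrightarrow> \<forall>x y :: 'a::metric_space. dist x y \<le> pi / (2 * sqrt K)"
    and "one_sided_cosq_condition K TYPE('a)"
  shows "\<forall>P Q :: 'a. \<forall>\<gamma>1 a1 b1 \<gamma>2 a2 b2.
           shortest P Q \<gamma>1 a1 b1 \<and> shortest P Q \<gamma>2 a2 b2 \<longrightarrow> same_curve \<gamma>1 a1 b1 \<gamma>2 a2 b2"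
proof (intro allI impI)
  fix P Q :: 'a and \<gamma>1 a1 b1 \<gamma>2 a2 b2
  assume sh: "shortest P Q \<gamma>1 a1 b1 \<and> shortest P Q \<gamma>2 a2 b2"
  then have sh1: "shortest P Q \<gamma>1 a1 b1" and sh2: "shortest P Q \<gamma>2 a2 b2" by auto
  show "same_curve \<gamma>1 a1 b1 \<gamma>2 a2 b2"
    unfolding same_curve_def
  proof (intro conjI ballI impI)
    show "curve_length \<gamma>1 a1 b1 = curve_length \<gamma>2 a2 b2" using sh1 sh2 unfolding shortest_def by simp
  next
    fix u v assume u: "u \<in> {a1..b1}" and v: "v \<in> {a2..b2}"
      and eq: "curve_length \<gamma>1 a1 u = curve_length \<gamma>2 a2 v"
    define s where "s = curve_length \<gamma>1 a1 u"
    have X: "dist P (\<gamma>1 u) = s" "dist (\<gamma>1 u) Q = dist P Q - s"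
      using shortest_point[OF sh1 u] unfolding s_def by auto
    have Y: "dist P (\<gamma>2 v) = s" "dist (\<gamma>2 v) Q = dist P Q - s"
      using shortest_point[OF sh2 v] eq unfolding s_def by auto
    consider "s = 0" | "dist P Q - s = 0" | "s > 0 \<and> dist P Q - s > 0"
      using X zero_le_dist[of P "\<gamma>1 u"] zero_le_dist[of "\<gamma>1 u" Q] by fastforce
    then show "\<gamma>1 u = \<gamma>2 v"
    proof cases
      case 1 then show ?thesis using X Y by simp
    next
      case 2 then show ?thesis using X Y by simp
    next
      case 3
      show ?thesis
      proof (rule key_points[OF assms, where P=P and Q=Q and s=s and t="dist P Q - s"])
        show "dist P (\<gamma>1 u) = s" by (rule X(1))
        show "dist P (\<gamma>2 v) = s" by (rule Y(1))
        show "dist (\<gamma>1 u) Q = dist P Q - s" by (rule X(2))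
        show "dist (\<gamma>2 v) Q = dist P Q - s" by (rule Y(2))
        show "dist P Q = s + (dist P Q - s)" by simp
        show "0 < s" "0 < dist P Q - s" using 3 by auto
      qed
    qed
  qed
qed

end
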